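(* Assume the standing setting and Assumptions (A1), (A2), (A3) described in the context. Then the Riccati difference equation $\Sigma_k=A_k\Sigma_{k+1}\Theta(\Sigma_{k+1})^{-1}A_k^\top+B_k\bar R_k^{-1}B_k^\top$, $k\in\mathcal{T}$, $\Sigma_N=0$, where $\Theta(\Sigma_{k+1})=I+\bar Q_k\Sigma_{k+1}$, admits a unique solution $\{\Sigma_k\}$ consisting of symmetric positive semidefinite matrices, and moreover $\Theta(\Sigma_{k+1})$ is invertible for every $k\in\mathcal{T}$.
   Context: Fix integers $N\ge 1$, $n,m\ge1$, $\mathcal{T}=\{0,\dots,N-1\}$. (A1): $A_k,C_k\in\mathbb{R}^{n\times n}$, $B_k\in\mathbb{R}^{n\times m}$ are deterministic matrices for $k\in\mathcal{T}$ (and a square-integrable process $q$ with $q_k$ $\mathcal{F}_{k-1}$-measurable is given). (A2): $G_0\in\mathbb{S}^n$, $Q_k\in\mathbb{S}^n$, $R_k\in\mathbb{S}^m$, $S_k\in\mathbb{R}^{m\times n}$ deterministic (and square-integrable processes $\eta,\rho$ with $\eta_k,\rho_k$ $\mathcal{F}_{k-1}$-measurable are given). (A3): $G_0\ge0$, $R_k$ uniformly positive definite, and $Q_k-S_k^\top R_k^{-1}S_k\ge0$ for all $k\in\mathcal{T}$. Here $\mathbb{S}^d$ denotes real symmetric $d\times d$ matrices. Define matrices $H_0,\dots,H_N$ by the forward recursion $H_0=G_0$, $H_{k+1}=A_k^\top H_kA_k+(A_k^\top H_kB_k)R_k^{-1}(B_k^\top H_kA_k)$, $k\in\mathcal{T}$.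 Set $\bar Q_k=Q_k-S_k^\top R_k^{-1}S_k$ and $\bar R_k=R_k+B_k^\top H_kB_k$. *)

theory Defs
  imports "HOL-Analysis.Analysis"
begin

definition sym_mat :: "real^'n^'n \<Rightarrow> bool" where
  "sym_mat M \<longleftrightarrow> transpose M = M"

definition psd :: "real^'n^'n \<Rightarrow> bool" where
  "psd M \<longleftrightarrow> sym_mat M \<and> (\<forall>x. 0 \<le> x \<bullet> (M *v x))"

primrec Hseq :: "(nat \<Rightarrow> real^'n^'n) \<Rightarrow> (nat \<Rightarrow> real^'m^'n) \<Rightarrow> (nat \<Rightarrow> real^'m^'m)
    \<Rightarrow> real^'n^'n \<Rightarrow> nat \<Rightarrow> real^'n^'n" where
  "Hseq A B R G0 0 = G0"
| "Hseq A B R G0 (Suc k) =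
     transpose (A k) ** Hseq A B R G0 k ** A k
     + (transpose (A k) ** Hseq A B R G0 k ** B k) ** matrix_inv (R k)
       ** (transpose (B k) ** Hseq A B R G0 k ** A k)"

definition Qbar :: "(nat \<Rightarrow> real^'n^'n) \<Rightarrow> (nat \<Rightarrow> real^'n^'m) \<Rightarrow> (nat \<Rightarrow> real^'m^'m)
    \<Rightarrow> nat \<Rightarrow> real^'n^'n" where
  "Qbar Q S R k = Q k - transpose (S k) ** matrix_inv (R k) ** S k"

definition Rbar :: "(nat \<Rightarrow> real^'n^'n) \<Rightarrow> (nat \<Rightarrow> real^'m^'n) \<Rightarrow> (nat \<Rightarrow> real^'m^'m)
    \<Rightarrow> real^'n^'n \<Rightarrow> nat \<Rightarrow> real^'m^'m" where
  "Rbar A B R G0 k = R k + transpose (B k) ** Hseq A B R G0 k ** B k"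

definition Theta :: "(nat \<Rightarrow> real^'n^'n) \<Rightarrow> (nat \<Rightarrow> real^'n^'m) \<Rightarrow> (nat \<Rightarrow> real^'m^'m)
    \<Rightarrow> nat \<Rightarrow> real^'n^'n \<Rightarrow> real^'n^'n" where
  "Theta Q S R k Sig = mat 1 + Qbar Q S R k ** Sig"

definition riccati_sol :: "nat \<Rightarrow> (nat \<Rightarrow> real^'n^'n) \<Rightarrow> (nat \<Rightarrow> real^'m^'n)
    \<Rightarrow> (nat \<Rightarrow> real^'n^'n) \<Rightarrow> (nat \<Rightarrow> real^'n^'m) \<Rightarrow> (nat \<Rightarrow> real^'m^'m)
    \<Rightarrow> real^'n^'n \<Rightarrow> (nat \<Rightarrow> real^'n^'n) \<Rightarrow> bool" where
  "riccati_sol N A B Q S R G0 Sig \<longleftrightarrow>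
     Sig N = 0 \<and>
     (\<forall>k<N. Sig k = A k ** Sig (Suc k) ** matrix_inv (Theta Q S R k (Sig (Suc k))) ** transpose (A k)
                   + B k ** matrix_inv (Rbar A B R G0 k) ** transpose (B k))"

end

theory Submission
  imports Defs
begin

lemma minv: fixes M :: "real^'n^'n" assumes "invertible M"
  shows "M ** matrix_inv M = mat 1" "matrix_inv M ** M = mat 1"
proof -
  have "\<exists>A'. M ** A' = mat 1 \<and> A' ** M = mat 1" using assms unfolding invertible_def by blast
  from someI_ex[OF this] show "M ** matrix_inv M = mat 1" "matrix_inv M ** M = mat 1"
    unfolding matrix_inv_def by auto
qed

lemma inv_of_ker: fixes M :: "real^'n^'n" assumes "\<And>x. M *v x = 0 \<Longrightarrow> x = 0"
  shows "invertible M"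
  using assms matrix_left_invertible_ker invertible_left_inverse by blast

lemma quad_transpose: fixes C :: "real^'b^'a" and M :: "real^'a^'a"
  shows "x \<bullet> ((transpose C ** M ** C) *v x) = (C *v x) \<bullet> (M *v (C *v x))"
  by (metis dot_lmul_matrix matrix_vector_mul_assoc vector_transpose_matrix)

lemma psd_cong: fixes C :: "real^'b^'a" and M :: "real^'a^'a"
  assumes "psd M" shows "psd (transpose C ** M ** C)"
  using assms unfolding psd_def sym_mat_def
  by (simp add: quad_transpose matrix_transpose_mul matrix_mul_assoc)

lemma transpose_add: "transpose (M + P) = transpose M + (transpose P :: real^'n^'m)"
  by (simp add: transpose_def vec_eq_iff)

lemma psd_add: assumes "psd M" "psd P" shows "psd (M + P)"
  using assms unfolding psd_def sym_mat_def
  by (simp add: matrix_vector_mult_add_rdistrib inner_add_right transpose_add add_nonneg_nonneg)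

lemma transpose_minv: fixes M :: "real^'n^'n" assumes "invertible M"
  shows "transpose (matrix_inv M) = matrix_inv (transpose M)"
proof -
  have ti: "invertible (transpose M)" using assms transpose_invertible by blast
  have "transpose (matrix_inv M) ** transpose M = mat 1"
    by (metis assms minv(1) matrix_transpose_mul transpose_mat)
  hence "transpose (matrix_inv M) = transpose (matrix_inv M) ** (transpose M ** matrix_inv (transpose M))"
    using minv(1)[OF ti] by simp
  also have "\<dots> = matrix_inv (transpose M)"
    by (simp add: matrix_mul_assoc \<open>transpose (matrix_inv M) ** transpose M = mat 1\<close>)
  finally show ?thesis .
qed

lemma psd_inv: fixes M :: "real^'n^'n" assumes "psd M" "invertible M"
  shows "psd (matrix_inv M)"
  unfolding psd_def sym_mat_def
proof
  show "transpose (matrix_inv M) = matrix_inv M"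
    using assms transpose_minv unfolding psd_def sym_mat_def by metis
  show "\<forall>x. 0 \<le> x \<bullet> (matrix_inv M *v x)"
  proof
    fix x
    define y where "y = matrix_inv M *v x"
    have "x = M *v y" unfolding y_def
      by (simp add: matrix_vector_mul_assoc minv[OF assms(2)])
    hence "x \<bullet> (matrix_inv M *v x) = y \<bullet> (M *v y)"
      unfolding y_def by (simp add: inner_commute)
    thus "0 \<le> x \<bullet> (matrix_inv M *v x)" using assms(1) unfolding psd_def by simp
  qed
qed

lemma psd_zero_quad: fixes M :: "real^'n^'n" assumes "psd M" "x \<bullet> (M *v x) = 0"
  shows "M *v x = 0"
proof -
  define v where "v = M *v x"
  have sym: "\<And>u. (M *v x) \<bullet> u = x \<bullet> (M *v u)"
    using assms(1) unfolding psd_def sym_mat_def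
    by (metis dot_lmul_matrix vector_transpose_matrix inner_commute)
  have e: "(x - t *\<^sub>R v) \<bullet> (M *v (x - t *\<^sub>R v)) =
      x \<bullet> (M *v x) - t * (x \<bullet> (M *v v)) - t * (v \<bullet> (M *v x)) + t * t * (v \<bullet> (M *v v))" for t
    by (simp add: matrix_vector_mult_diff_distrib matrix_vector_mult_scaleR inner_diff_left inner_diff_right inner_commute[of v "M *v x"]) (simp add: right_diff_distrib)
  have xv: "x \<bullet> (M *v v) = v \<bullet> v" using sym[of v] v_def by simp
  have vx: "v \<bullet> (M *v x) = v \<bullet> v" using v_def by simp
  define a where "a = v \<bullet> v"
  define b where "b = v \<bullet> (M *v v)"
  have h': "0 \<le> - 2 * t * a + t * t * b" for t
  proof -
    have "0 \<le> (x - t *\<^sub>R v) \<bullet> (M *v (x - t *\<^sub>R v))" using assms(1) unfolding psd_def by blast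
    also have "\<dots> = - 2 * t * a + t * t * b" unfolding e xv vx assms(2) a_def b_def by simp
    finally show ?thesis .
  qed
  have a0: "a \<ge> 0" unfolding a_def by simp
  have b0: "b \<ge> 0" using assms(1) unfolding b_def psd_def by simp
  have "a = 0"
  proof (rule ccontr)
    assume "a \<noteq> 0" hence ap: "a > 0" using a0 by simp
    define t where "t = a / (b + 1)"
    have tp: "t > 0" using ap b0 t_def by simp
    have "t * b < 2 * a"
    proof -
      have "a * b < a * (b + 1)" using ap by simp
      also have "\<dots> \<le> 2 * a * (b + 1)" using ap b0 by simp
      finally show ?thesis using b0 unfolding t_def by (simp add: field_simps)
    qed
    hence "t * (t * b) < t * (2 * a)" using tp by simp
    thus False using h'[of t] by (simp add: mult.assoc)
  qed
  thus ?thesis unfolding a_def v_def by simp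
qed


lemma matrix_add_rdistrib: "((B + C) ** A) = (B ** A) + (C ** (A::real^'c^'b))"
  by (vector matrix_matrix_mult_def sum.distrib[symmetric] field_simps)

lemma zero_psd: "psd (0::real^'n^'n)"
  by (simp add: psd_def sym_mat_def transpose_def vec_eq_iff)

lemma theta_inv: fixes Sg Qb :: "real^'n^'n" assumes "psd Sg" "psd Qb"
  shows "invertible (mat 1 + Qb ** Sg)"
proof (rule inv_of_ker)
  fix x assume "(mat 1 + Qb ** Sg) *v x = 0"
  hence xe: "x = - (Qb *v (Sg *v x))"
    by (simp add: matrix_vector_mult_add_rdistrib matrix_vector_mul_assoc eq_neg_iff_add_eq_0)
  have sym: "x \<bullet> (Sg *v x) = (Sg *v x) \<bullet> x"
    by (simp add: inner_commute)
  also have "\<dots> = - ((Sg *v x) \<bullet> (Qb *v (Sg *v x)))"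
    by (subst (2) xe) (simp add: inner_minus_right)
  finally have "x \<bullet> (Sg *v x) \<le> 0" using assms(2) unfolding psd_def by simp
  moreover have "x \<bullet> (Sg *v x) \<ge> 0" using assms(1) unfolding psd_def by simp
  ultimately have "Sg *v x = 0" using psd_zero_quad[OF assms(1)] by simp
  thus "x = 0" using xe by simp
qed

lemma psd_SThinv: fixes Sg Qb :: "real^'n^'n" assumes "psd Sg" "psd Qb"
  shows "psd (Sg ** matrix_inv (mat 1 + Qb ** Sg))"
proof -
  define Th where "Th = mat 1 + Qb ** Sg"
  have inv: "invertible Th" unfolding Th_def using theta_inv[OF assms] .
  have sS: "transpose Sg = Sg" and sQ: "transpose Qb = Qb" using assms unfolding psd_def sym_mat_def by auto
  have tTh: "transpose Th = mat 1 + Sg ** Qb" unfolding Th_def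
    by (simp add: transpose_add matrix_transpose_mul sS sQ)
  have comm: "transpose Th ** Sg = Sg ** Th"
    unfolding tTh unfolding Th_def by (simp add: matrix_add_ldistrib matrix_add_rdistrib matrix_mul_assoc)
  have ti: "invertible (transpose Th)" using inv transpose_invertible by blast
  have "transpose (Sg ** matrix_inv Th) = matrix_inv (transpose Th) ** Sg"
    by (simp add: matrix_transpose_mul transpose_minv[OF inv] sS)
  also have "\<dots> = matrix_inv (transpose Th) ** Sg ** (Th ** matrix_inv Th)"
    by (simp add: minv[OF inv])
  also have "\<dots> = matrix_inv (transpose Th) ** (transpose Th ** Sg) ** matrix_inv Th"
    by (simp add: comm matrix_mul_assoc)
  also have "\<dots> = Sg ** matrix_inv Th"
    by (simp add: matrix_mul_assoc minv[OF ti])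
  finally have symm: "transpose (Sg ** matrix_inv Th) = Sg ** matrix_inv Th" .
  have q: "0 \<le> x \<bullet> ((Sg ** matrix_inv Th) *v x)" for x
  proof -
    define y where "y = matrix_inv Th *v x"
    have "x = Th *v y" unfolding y_def by (simp add: matrix_vector_mul_assoc minv[OF inv])
    hence xe: "x = y + Qb *v (Sg *v y)" unfolding Th_def
      by (simp add: matrix_vector_mult_add_rdistrib matrix_vector_mul_assoc)
    have "x \<bullet> ((Sg ** matrix_inv Th) *v x) = x \<bullet> (Sg *v y)"
      unfolding y_def by (simp add: matrix_vector_mul_assoc)
    also have "\<dots> = y \<bullet> (Sg *v y) + (Sg *v y) \<bullet> (Qb *v (Sg *v y))"
      by (subst xe) (simp add: inner_add_left inner_add_right inner_commute[of "Sg *v y" y], rule inner_commute)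
    finally show ?thesis using assms unfolding psd_def
      by (metis add_nonneg_nonneg)
  qed
  show ?thesis unfolding psd_def sym_mat_def Th_def[symmetric] using symm q by simp
qed

lemma pd_psd_inv: fixes M :: "real^'n^'n" assumes "sym_mat M" "\<And>x. x \<noteq> 0 \<Longrightarrow> 0 < x \<bullet> (M *v x)"
  shows "psd M" "invertible M" "psd (matrix_inv M)"
proof -
  show p: "psd M" unfolding psd_def using assms by (metis inner_zero_left matrix_vector_mult_0_right order_le_less)
  show i: "invertible M"
    by (rule inv_of_ker) (metis assms(2) inner_zero_right less_irrefl)
  show "psd (matrix_inv M)" using psd_inv[OF p i] .
qed

lemma Hseq_psd: assumes "psd G0" "\<forall>j<k. psd (matrix_inv (R j))"
  shows "psd (Hseq A B R G0 k)"
  using assms(2)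
proof (induction k)
  case 0 then show ?case using assms(1) by simp
next
  case (Suc k)
  define H where "H = Hseq A B R G0 k"
  have pH: "psd H" unfolding H_def using Suc by simp
  have sH: "transpose H = H" using pH unfolding psd_def sym_mat_def by simp
  have pR: "psd (matrix_inv (R k))" using Suc.prems by simp
  define C where "C = transpose (B k) ** H ** A k"
  have tC: "transpose C = transpose (A k) ** H ** B k"
    unfolding C_def by (simp add: matrix_transpose_mul sH matrix_mul_assoc)
  have "Hseq A B R G0 (Suc k) = transpose (A k) ** H ** A k + transpose C ** matrix_inv (R k) ** C"
    unfolding tC by (simp add: H_def C_def)
  then show ?case using psd_add psd_cong pH pR by metis
qed


primrec bwd :: "(nat \<Rightarrow> 'a \<Rightarrow> 'a) \<Rightarrow> 'a \<Rightarrow> nat \<Rightarrow> nat \<Rightarrow> 'a" where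
  "bwd f z N 0 = z"
| "bwd f z N (Suc j) = f (N - Suc j) (bwd f z N j)"

theorem theorem4p3:
  fixes N :: nat
    and A :: "nat \<Rightarrow> real^'n^'n" and B :: "nat \<Rightarrow> real^'m^'n"
    and G0 :: "real^'n^'n" and Q :: "nat \<Rightarrow> real^'n^'n"
    and R :: "nat \<Rightarrow> real^'m^'m" and S :: "nat \<Rightarrow> real^'n^'m"
  assumes N: "N \<ge> 1"
    and G0_sym: "sym_mat G0" and Q_sym: "\<forall>k<N. sym_mat (Q k)" and R_sym: "\<forall>k<N. sym_mat (R k)"
    and G0_psd: "psd G0"
    and R_unif_pd: "\<exists>\<delta>>0. \<forall>k<N. \<forall>x. \<delta> * (norm x)\<^sup>2 \<le> x \<bullet> (R k *v x)"
    and Qbar_psd: "\<forall>k<N. psd (Q k - transpose (S k) ** matrix_inv (R k) ** S k)"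
  shows "\<exists>Sig. riccati_sol N A B Q S R G0 Sig
            \<and> (\<forall>k\<le>N. psd (Sig k))
            \<and> (\<forall>k<N. invertible (Theta Q S R k (Sig (Suc k))))
            \<and> (\<forall>Sig'. riccati_sol N A B Q S R G0 Sig' \<longrightarrow> (\<forall>k\<le>N. Sig' k = Sig k))"
proof -
  obtain \<delta> where dp: "\<delta> > 0" and dR: "\<forall>k<N. \<forall>x. \<delta> * (norm x)\<^sup>2 \<le> x \<bullet> (R k *v x)"
    using R_unif_pd by blast
  have Rpos: "0 < x \<bullet> (R k *v x)" if "k < N" "x \<noteq> 0" for k x
  proof -
    have "0 < \<delta> * (norm x)\<^sup>2" using dp that by simp
    thus ?thesis using dR that by (meson less_le_trans)
  qed
  have Rinv: "psd (matrix_inv (R k))" if "k < N" for k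
    using pd_psd_inv(3)[of "R k"] R_sym Rpos that by blast
  have Hpsd: "psd (Hseq A B R G0 k)" if "k \<le> N" for k
  proof (rule Hseq_psd[OF G0_psd])
    show "\<forall>j<k. psd (matrix_inv (R j))" using Rinv that by simp
  qed
  have Rbinv: "psd (matrix_inv (Rbar A B R G0 k))" if "k < N" for k
  proof (rule pd_psd_inv(3))
    have pC: "psd (transpose (B k) ** Hseq A B R G0 k ** B k)"
      using psd_cong[OF Hpsd[of k]] that by simp
    have "psd (R k)" using pd_psd_inv(1)[of "R k"] R_sym Rpos that by blast
    hence "psd (Rbar A B R G0 k)" unfolding Rbar_def using psd_add pC by blast
    thus "sym_mat (Rbar A B R G0 k)" unfolding psd_def by simp
    fix x :: "real^'m" assume "x \<noteq> 0"
    hence "0 < x \<bullet> (R k *v x)" using Rpos that by simp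
    moreover have "0 \<le> x \<bullet> ((transpose (B k) ** Hseq A B R G0 k ** B k) *v x)"
      using pC unfolding psd_def by simp
    ultimately show "0 < x \<bullet> (Rbar A B R G0 k *v x)" unfolding Rbar_def
      by (simp add: matrix_vector_mult_add_rdistrib inner_add_right)
  qed
  have Qb: "psd (Qbar Q S R k)" if "k < N" for k
    using Qbar_psd that unfolding Qbar_def by simp
  define F where "F k Sg = A k ** Sg ** matrix_inv (Theta Q S R k Sg) ** transpose (A k)
                   + B k ** matrix_inv (Rbar A B R G0 k) ** transpose (B k)" for k Sg
  define Sig where "Sig k = bwd F 0 N (N - k)" for k
  have SN: "Sig N = 0" unfolding Sig_def by simp
  have Sstep: "Sig k = F k (Sig (Suc k))" if "k < N" for k
  proof -
    have "N - k = Suc (N - Suc k)" using that by simp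
    moreover have "N - Suc (N - Suc k) = k" using that by simp
    ultimately show ?thesis unfolding Sig_def by simp
  qed
  have rs: "riccati_sol N A B Q S R G0 Sig"
    unfolding riccati_sol_def using SN Sstep unfolding F_def by blast
  have Fpsd: "psd (F k Sg)" if "k < N" "psd Sg" for k Sg
  proof -
    have "psd (Sg ** matrix_inv (Theta Q S R k Sg))"
      unfolding Theta_def using psd_SThinv[OF that(2) Qb[OF that(1)]] .
    hence p1: "psd (A k ** (Sg ** matrix_inv (Theta Q S R k Sg)) ** transpose (A k))"
      using psd_cong[of _ "transpose (A k)"] by fastforce
    have p2: "psd (B k ** matrix_inv (Rbar A B R G0 k) ** transpose (B k))"
      using psd_cong[OF Rbinv[OF that(1)], of "transpose (B k)"] by simp
    show ?thesis unfolding F_def using psd_add[OF p1 p2] by (simp add: matrix_mul_assoc)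
  qed
  have allpsd: "\<forall>j\<le>N. psd (Sig (N - j))"
  proof (intro allI impI)
    fix j assume "j \<le> N" thus "psd (Sig (N - j))"
    proof (induction j)
      case 0 then show ?case using SN zero_psd by simp
    next
      case (Suc j)
      have "N - Suc j < N" "Suc (N - Suc j) = N - j" using Suc.prems by auto
      then show ?case using Sstep Fpsd Suc by (metis Suc_leD)
    qed
  qed
  have P: "\<forall>k\<le>N. psd (Sig k)"
  proof (intro allI impI)
    fix k assume "k \<le> N" thus "psd (Sig k)" using allpsd[rule_format, of "N - k"] by simp
  qed
  have I: "\<forall>k<N. invertible (Theta Q S R k (Sig (Suc k)))"
    unfolding Theta_def using P Qb theta_inv by (meson Suc_leI)
  have U: "\<forall>Sig'. riccati_sol N A B Q S R G0 Sig' \<longrightarrow> (\<forall>k\<le>N. Sig' k = Sig k)"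
  proof (intro allI impI)
    fix Sig' k assume r: "riccati_sol N A B Q S R G0 Sig'" and kN: "k \<le> N"
    have S'N: "Sig' N = 0" and S'step: "\<And>k. k < N \<Longrightarrow> Sig' k = F k (Sig' (Suc k))"
      using r unfolding riccati_sol_def F_def by auto
    have "\<forall>j\<le>N. Sig' (N - j) = Sig (N - j)"
    proof (intro allI impI)
      fix j assume "j \<le> N" thus "Sig' (N - j) = Sig (N - j)"
      proof (induction j)
        case 0 then show ?case using SN S'N by simp
      next
        case (Suc j)
        have "N - Suc j < N" "Suc (N - Suc j) = N - j" using Suc.prems by auto
        then show ?case using Sstep S'step Suc by (metis Suc_leD)
      qed
    qed
    thus "Sig' k = Sig k" using kN by (metis diff_diff_cancel diff_le_self)
  qed
  show ?thesis using rs P I U by blast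
qed

end
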